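(* Let $P$ be a finite poset, let $\overline{P}$ be its dual poset, and let $J(P)$ be the distributive lattice of lower ideals of $P$ ordered by inclusion, with the height function $\operatorname{rk}(I)=\#I$. Then $$\mathsf{Z}_{J(P),\operatorname{rk}}(1+qx)=\mathsf{L}_{\overline{P}}(x).$$
   Context: $q$ is an indeterminate; $[n]_q=(q^n-1)/(q-1)$ for $n\in\mathbb{Z}$. For a finite poset $R$ with height function $h:R\to\mathbb{N}$ (i.e. $h(x)<h(y)$ whenever $y$ covers $x$), the $q$-Zeta polynomial $\mathsf{Z}_{R,h}\in\mathbb{Q}(q)[x]$ is the unique polynomial such that $\mathsf{Z}_{R,h}([n]_q)=\sum_{e_1\le\cdots\le e_{n-1}\text{ in }R}q^{h(e_1)+\cdots+h(e_{n-1})}$ for all integers $n\ge2$ (such a polynomial exists; explicitly it is $\sum_{k\ge1}\sum_{c_1<\cdots<c_k}q^{\sum h(c_i)}\mathsf{E}_{(h(c_1),\dots,h(c_k))}((x-[k+1]_q)/q^{k+1})$, where $\mathsf{E}_a$ is the unique polynomial with $\mathsf{E}_a([n]_q)=\sum_{m\in\mathbb{N}^k,\sum m_i=n}q^{\sum a_im_i}$ for $n\ge0$). For a finite poset $R$, its order polytope is $Q_R=\{z\in\mathbb{R}^R:0\le z_p\le1\text{ for all }p,\ z_p\le z_{p'}\text{ whenever }p\le p'\}$, and its $q$-order polynomial $\mathsf{L}_R\in\mathbb{Q}(q)[x]$ is the unique polynomial with $\mathsf{L}_R([n]_q)=\sum_{z\in nQ_R\cap\mathbb{Z}^R}q^{\sum_{p}z_p}$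 for all $n\ge0$. *)

theory Defs
  imports "HOL-Computational_Algebra.Polynomial" "HOL-Computational_Algebra.Fraction_Field"
    "HOL-Library.FuncSet"
begin

type_synonym qfield = "rat poly fract"

definition qvar :: qfield where
  "qvar = Fract [:0, 1:] 1"

definition qint :: "nat \<Rightarrow> qfield" where
  "qint n = (qvar ^ n - 1) / (qvar - 1)"

definition multichains :: "'a set \<Rightarrow> ('a \<Rightarrow> 'a \<Rightarrow> bool) \<Rightarrow> nat \<Rightarrow> 'a list set" where
  "multichains R le k = {es. length es = k \<and> set es \<subseteq> R \<and> sorted_wrt le es}"

definition qZeta :: "'a set \<Rightarrow> ('a \<Rightarrow> 'a \<Rightarrow> bool) \<Rightarrow> ('a \<Rightarrow> nat) \<Rightarrow> qfield poly" where
  "qZeta R le h = (THE p. \<forall>n\<ge>2. poly p (qint n) =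
      (\<Sum>es\<in>multichains R le (n - 1). qvar ^ (\<Sum>e\<leftarrow>es. h e)))"

text \<open>Lattice points of the dilated order polytope n Q_R.\<close>
definition order_points :: "'a set \<Rightarrow> ('a \<Rightarrow> 'a \<Rightarrow> bool) \<Rightarrow> nat \<Rightarrow> ('a \<Rightarrow> nat) set" where
  "order_points R le n = {z \<in> R \<rightarrow>\<^sub>E {0..n}. \<forall>p\<in>R. \<forall>p'\<in>R. le p p' \<longrightarrow> z p \<le> z p'}"

definition qOrder :: "'a set \<Rightarrow> ('a \<Rightarrow> 'a \<Rightarrow> bool) \<Rightarrow> qfield poly" where
  "qOrder R le = (THE p. \<forall>n. poly p (qint n) =
      (\<Sum>z\<in>order_points R le n. qvar ^ (\<Sum>p\<in>R. z p)))"

definition lower_ideals :: "'a set \<Rightarrow> ('a \<Rightarrow> 'a \<Rightarrow> bool) \<Rightarrow> 'a set set" where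
  "lower_ideals A le = {I. I \<subseteq> A \<and> (\<forall>x\<in>I. \<forall>y\<in>A. le y x \<longrightarrow> y \<in> I)}"

end

theory Submission
  imports Defs
begin

lemma qvar_pow: "qvar ^ n = Fract ([:0,1:] ^ n) 1"
  by (induct n) (simp_all add: qvar_def One_fract_def)

lemma qvar_pow_inj: "qvar ^ i = qvar ^ j \<Longrightarrow> i = j"
proof -
  assume "qvar ^ i = qvar ^ j"
  hence "([:0,1:] ^ i :: rat poly) = [:0,1:] ^ j" by (simp add: qvar_pow eq_fract)
  hence "degree ([:0,1:] ^ i :: rat poly) = degree ([:0,1:] ^ j :: rat poly)" by simp
  thus "i = j" using degree_linear_power[of "0::rat"] by simp
qed

lemma qvar_ne1: "qvar \<noteq> 1"
  using qvar_pow_inj[of 1 0] by auto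

lemma qvar_ne0: "qvar \<noteq> 0"
  using qvar_pow_inj[of 1 2] by (auto simp: power2_eq_square)

lemma qint_mult: "qint n * (qvar - 1) = qvar ^ n - 1"
  using qvar_ne1 by (simp add: qint_def)

lemma qint_Suc: "qint (Suc n) = 1 + qvar * qint n"
proof -
  have "(1 + qvar * qint n) * (qvar - 1) = (qvar - 1) + qvar * (qint n * (qvar - 1))"
    by (simp add: algebra_simps)
  also have "\<dots> = qvar ^ Suc n - 1" by (simp only: qint_mult) (simp add: algebra_simps)
  finally have "qint (Suc n) * (qvar - 1) = (1 + qvar * qint n) * (qvar - 1)"
    by (simp add: qint_mult)
  thus ?thesis using qvar_ne1 by simp
qed

lemma qint_inj: "qint n = qint m \<Longrightarrow> n = m"
  using qint_mult[of n] qint_mult[of m] qvar_pow_inj by fastforce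

lemma poly_unique:
  fixes p p' :: "qfield poly"
  assumes "\<And>n. n \<ge> m \<Longrightarrow> poly p (qint n) = poly p' (qint n)"
  shows "p = p'"
proof (rule ccontr)
  assume "p \<noteq> p'"
  hence "p - p' \<noteq> 0" by simp
  hence fin: "finite {x. poly (p - p') x = 0}" by (rule poly_roots_finite)
  have "qint ` {m..} \<subseteq> {x. poly (p - p') x = 0}" using assms by auto
  hence "finite (qint ` {m..})" using fin finite_subset by blast
  moreover have "inj_on qint {m..}" by (auto intro: inj_onI qint_inj)
  ultimately have "finite {m..}" using finite_imageD by blast
  thus False using infinite_Ici[of m] by simp
qed

definition goodd :: "nat \<Rightarrow> (nat \<Rightarrow> qfield) \<Rightarrow> bool" where
  "goodd d F \<longleftrightarrow> (\<exists>c. \<forall>n. F n = (\<Sum>i<d. c i * qvar ^ (i * n)))"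

lemma goodd_mono:
  assumes "goodd d F" "d \<le> d'" shows "goodd d' F"
proof -
  obtain c where c: "\<And>n. F n = (\<Sum>i<d. c i * qvar ^ (i * n))" using assms unfolding goodd_def by blast
  define c' where "c' i = (if i < d then c i else 0)" for i
  have "F n = (\<Sum>i<d'. c' i * qvar ^ (i * n))" for n
  proof -
    have "(\<Sum>i<d'. c' i * qvar ^ (i * n)) = (\<Sum>i<d. c' i * qvar ^ (i * n))"
      by (rule sum.mono_neutral_right) (use assms in \<open>auto simp: c'_def\<close>)
    thus ?thesis by (simp add: c c'_def)
  qed
  thus ?thesis unfolding goodd_def by blast
qed

lemma goodd_zero: "goodd d (\<lambda>n. 0)"
  unfolding goodd_def by (rule exI[of _ "\<lambda>_. 0"]) simp

lemma goodd_add: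
  assumes "goodd d F" "goodd d G" shows "goodd d (\<lambda>n. F n + G n)"
proof -
  obtain c where c: "\<And>n. F n = (\<Sum>i<d. c i * qvar ^ (i * n))" using assms unfolding goodd_def by blast
  obtain e where e: "\<And>n. G n = (\<Sum>i<d. e i * qvar ^ (i * n))" using assms unfolding goodd_def by blast
  show ?thesis unfolding goodd_def
    by (rule exI[of _ "\<lambda>i. c i + e i"]) (simp add: c e sum.distrib algebra_simps)
qed

lemma goodd_cmult:
  assumes "goodd d F" shows "goodd d (\<lambda>n. a * F n)"
proof -
  obtain c where c: "\<And>n. F n = (\<Sum>i<d. c i * qvar ^ (i * n))" using assms unfolding goodd_def by blast
  show ?thesis unfolding goodd_def
    by (rule exI[of _ "\<lambda>i. a * c i"]) (simp add: c sum_distrib_left algebra_simps)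
qed

lemma goodd_sum:
  assumes "finite S" "\<And>U. U \<in> S \<Longrightarrow> goodd d (G U)"
  shows "goodd d (\<lambda>n. \<Sum>U\<in>S. G U n)"
  using assms
proof (induct S rule: finite_induct)
  case empty thus ?case by (simp add: goodd_zero)
next
  case (insert x F) thus ?case using goodd_add[of d "G x" "\<lambda>n. \<Sum>U\<in>F. G U n"] by simp
qed

lemma goodd_rec:
  assumes rec: "\<And>n. F (Suc n) = qvar ^ a * F n + H n" and gH: "goodd a H"
  shows "goodd (Suc a) F"
proof -
  obtain h where h: "\<And>n. H n = (\<Sum>i<a. h i * qvar ^ (i * n))" using gH unfolding goodd_def by blast
  define c where "c i = (if i < a then h i / (qvar ^ i - qvar ^ a) else F 0 - (\<Sum>j<a. h j / (qvar ^ j - qvar ^ a)))" for i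
  have ci: "c i * qvar ^ i = qvar ^ a * c i + h i" if "i < a" for i
  proof -
    have "qvar ^ i - qvar ^ a \<noteq> 0" using qvar_pow_inj[of i a] that by auto
    thus ?thesis using that by (simp add: c_def field_simps)
  qed
  have "F n = (\<Sum>i<Suc a. c i * qvar ^ (i * n))" for n
  proof (induct n)
    case 0
    show ?case by (simp add: c_def)
  next
    case (Suc n)
    have "F (Suc n) = qvar ^ a * (\<Sum>i<Suc a. c i * qvar ^ (i * n)) + (\<Sum>i<a. h i * qvar ^ (i * n))"
      using rec Suc h by simp
    also have "\<dots> = qvar ^ a * (c a * qvar ^ (a * n)) + (\<Sum>i<a. (qvar ^ a * c i + h i) * qvar ^ (i * n))"
      by (simp add: sum_distrib_left sum.distrib algebra_simps)
    also have "\<dots> = c a * qvar ^ (a * Suc n) + (\<Sum>i<a. (c i * qvar ^ i) * qvar ^ (i * n))"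
      using ci by (simp add: power_add algebra_simps)
    also have "\<dots> = (\<Sum>i<Suc a. c i * qvar ^ (i * Suc n))"
      by (simp add: power_add algebra_simps)
    finally show ?case .
  qed
  thus ?thesis unfolding goodd_def by blast
qed

lemma goodd_poly:
  assumes "goodd d F" shows "\<exists>p. \<forall>n. poly p (qint n) = F n"
proof -
  obtain c where c: "\<And>n. F n = (\<Sum>i<d. c i * qvar ^ (i * n))" using assms unfolding goodd_def by blast
  define p where "p = (\<Sum>i<d. smult (c i) ([:1, qvar - 1:] ^ i))"
  have "poly p (qint n) = F n" for n
  proof -
    have e: "1 + qint n * (qvar - 1) = qvar ^ n" by (simp add: qint_mult)
    have "poly p (qint n) = (\<Sum>i<d. c i * (qvar ^ n) ^ i)"
      unfolding p_def poly_sum by (simp add: e)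
    also have "\<dots> = F n" by (simp add: c power_mult[symmetric] mult.commute)
    finally show ?thesis .
  qed
  thus ?thesis by blast
qed


definition fB :: "'a set \<Rightarrow> ('a \<Rightarrow> 'a \<Rightarrow> bool) \<Rightarrow> nat \<Rightarrow> qfield" where
  "fB B le n = (\<Sum>z\<in>order_points B le n. qvar ^ (\<Sum>p\<in>B. z p))"

definition compat :: "'a set \<Rightarrow> ('a \<Rightarrow> 'a \<Rightarrow> bool) \<Rightarrow> 'a set \<Rightarrow> bool" where
  "compat B le U \<longleftrightarrow> (\<forall>p\<in>U. \<forall>p'\<in>B - U. \<not> le p p')"

lemma finite_op: "finite B \<Longrightarrow> finite (order_points B le n)"
  unfolding order_points_def
  by (rule finite_subset[of _ "B \<rightarrow>\<^sub>E {0..n}"]) (auto intro: finite_PiE)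

lemma fiber_sum:
  assumes fin: "finite B" and UB: "U \<subseteq> B"
  shows "(\<Sum>z\<in>{z \<in> order_points B le (Suc n). {p\<in>B. 0 < z p} = U}. qvar ^ (\<Sum>p\<in>B. z p))
     = (if compat B le U then qvar ^ card U * fB U le n else 0)"
proof (cases "compat B le U")
  case False
  then obtain p p' where pp: "p \<in> U" "p' \<in> B - U" "le p p'" unfolding compat_def by blast
  have E: "{z \<in> order_points B le (Suc n). {p\<in>B. 0 < z p} = U} = {}"
  proof (rule ccontr)
    assume "\<not> ?thesis"
    then obtain z where z: "z \<in> order_points B le (Suc n)" "{p\<in>B. 0 < z p} = U" by blast
    have "z p \<le> z p'" using z(1) pp UB unfolding order_points_def by blast
    moreover have "0 < z p" "z p' = 0" using z(2) pp UB by auto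
    ultimately show False by simp
  qed
  show ?thesis unfolding E using False by simp
next
  case True
  have finU: "finite U" using fin UB finite_subset by blast
  define j where "j z = (\<lambda>p\<in>U. z p - 1)" for z :: "'a \<Rightarrow> nat"
  define i where "i z' = (\<lambda>p. if p \<in> U then Suc (z' p) else if p \<in> B then 0 else undefined)" for z' :: "'a \<Rightarrow> nat"
  have "(\<Sum>z\<in>{z \<in> order_points B le (Suc n). {p\<in>B. 0 < z p} = U}. qvar ^ (\<Sum>p\<in>B. z p))
      = (\<Sum>z'\<in>order_points U le n. qvar ^ card U * qvar ^ (\<Sum>p\<in>U. z' p))"
  proof (rule sum.reindex_bij_witness[where i = i and j = j])
    fix z assume z: "z \<in> {z \<in> order_points B le (Suc n). {p\<in>B. 0 < z p} = U}"
    hence ext: "z \<in> extensional B" unfolding order_points_def by (auto simp: PiE_iff)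
    show "i (j z) = z"
    proof
      fix p show "i (j z) p = z p"
        using z ext UB unfolding i_def j_def extensional_def by auto
    qed
    show "j z \<in> order_points U le n"
      using z UB unfolding j_def order_points_def by (auto simp: PiE_iff subset_iff) (meson diff_le_mono)+
    have "(\<Sum>p\<in>B. z p) = (\<Sum>p\<in>U. z p)"
      by (rule sum.mono_neutral_right) (use fin UB z in auto)
    also have "\<dots> = (\<Sum>p\<in>U. Suc (j z p))" 
      by (rule sum.cong) (use z in \<open>auto simp: j_def\<close>)
    also have "\<dots> = card U + (\<Sum>p\<in>U. j z p)" by (simp add: sum_Suc)
    finally show "qvar ^ card U * qvar ^ (\<Sum>p\<in>U. j z p) = qvar ^ (\<Sum>p\<in>B. z p)"
      by (simp add: power_add)
  next
    fix z' assume z': "z' \<in> order_points U le n"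
    hence ext: "z' \<in> extensional U" unfolding order_points_def by (auto simp: PiE_iff)
    show "j (i z') = z'"
    proof
      fix p show "j (i z') p = z' p"
        using ext unfolding i_def j_def extensional_def by auto
    qed
    show "i z' \<in> {z \<in> order_points B le (Suc n). {p\<in>B. 0 < z p} = U}"
      using z' UB True unfolding i_def order_points_def compat_def
      by (auto simp: PiE_iff extensional_def) 
  qed
  also have "\<dots> = qvar ^ card U * fB U le n" by (simp add: fB_def sum_distrib_left)
  finally show ?thesis using True by simp
qed

lemma fB_Suc:
  assumes fin: "finite B"
  shows "fB B le (Suc n) = (\<Sum>U\<in>Pow B. if compat B le U then qvar ^ card U * fB U le n else 0)"
proof -
  have "fB B le (Suc n) = (\<Sum>U\<in>Pow B. \<Sum>z\<in>{z \<in> order_points B le (Suc n). {p\<in>B. 0 < z p} = U}. qvar ^ (\<Sum>p\<in>B. z p))"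
    unfolding fB_def
    by (rule sum.group[symmetric]) (use fin finite_op in auto)
  also have "\<dots> = (\<Sum>U\<in>Pow B. if compat B le U then qvar ^ card U * fB U le n else 0)"
    by (rule sum.cong[OF refl], rule fiber_sum) (use fin in auto)
  finally show ?thesis .
qed

lemma fB_good: "finite B \<Longrightarrow> goodd (Suc (card B)) (fB B le)"
proof (induct "card B" arbitrary: B rule: less_induct)
  case less
  define T where "T U n = (if compat B le U then qvar ^ card U * fB U le n else 0)" for U n
  have "fB B le (Suc n) = qvar ^ card B * fB B le n + (\<Sum>U\<in>Pow B - {B}. T U n)" for n
  proof -
    have "fB B le (Suc n) = (\<Sum>U\<in>Pow B. T U n)" using fB_Suc[OF less.prems] by (simp add: T_def)
    also have "\<dots> = T B n + (\<Sum>U\<in>Pow B - {B}. T U n)"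
      by (rule sum.remove) (use less.prems in auto)
    finally show ?thesis by (simp add: T_def compat_def)
  qed
  moreover have "goodd (card B) (\<lambda>n. \<Sum>U\<in>Pow B - {B}. T U n)"
  proof (rule goodd_sum)
    show "finite (Pow B - {B})" using less.prems by simp
  next
    fix U assume U: "U \<in> Pow B - {B}"
    hence lt: "card U < card B" using less.prems by (auto intro: psubset_card_mono)
    have finU: "finite U" using U less.prems finite_subset by auto
    show "goodd (card B) (T U)"
    proof (cases "compat B le U")
      case True
      have "goodd (Suc (card U)) (fB U le)" using less.hyps[OF lt finU] .
      hence "goodd (Suc (card U)) (\<lambda>n. qvar ^ card U * fB U le n)" by (rule goodd_cmult)
      hence "goodd (card B) (\<lambda>n. qvar ^ card U * fB U le n)" by (rule goodd_mono) (use lt in simp)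
      thus ?thesis using True by (simp add: T_def[abs_def])
    next
      case False thus ?thesis by (simp add: T_def[abs_def] goodd_zero)
    qed
  qed
  ultimately show ?case by (rule goodd_rec)
qed


lemma card_filter_sum: "finite X \<Longrightarrow> card {x\<in>X. P x} = (\<Sum>x\<in>X. if P x then 1 else 0)"
  by (simp add: sum.inter_filter[symmetric])

lemma chain_mem:
  assumes srt: "sorted_wrt (\<subseteq>) es" and len: "length es = k" and m: "m < k"
  shows "p \<in> es ! m \<longleftrightarrow> k - m \<le> card {i. i < k \<and> p \<in> es ! i}"
proof -
  let ?S = "{i. i < k \<and> p \<in> es ! i}"
  have finS: "finite ?S" by (rule finite_subset[of _ "{..<k}"]) auto
  have up: "es ! a \<subseteq> es ! b" if "a \<le> b" "b < k" for a b
  proof (cases "a = b")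
    case False thus ?thesis using that srt len sorted_wrt_nth_less[of "(\<subseteq>)" es a b] by auto
  qed simp
  show ?thesis
  proof
    assume "p \<in> es ! m"
    hence "{m..<k} \<subseteq> ?S" using up by fastforce
    hence "card {m..<k} \<le> card ?S" using finS card_mono by blast
    thus "k - m \<le> card ?S" by simp
  next
    assume c: "k - m \<le> card ?S"
    show "p \<in> es ! m"
    proof (rule ccontr)
      assume "p \<notin> es ! m"
      hence "?S \<subseteq> {Suc m..<k}" using up m by (auto simp: not_less_eq_eq[symmetric]) (meson not_less subsetD up)
      hence "card ?S \<le> card {Suc m..<k}" by (rule card_mono[rotated]) simp
      thus False using c m by simp
    qed
  qed
qed

lemma chain_bij:
  assumes fin: "finite A"
  shows "(\<Sum>es\<in>multichains (lower_ideals A le) (\<subseteq>) k. qvar ^ (\<Sum>e\<leftarrow>es. card e))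
       = fB A (\<lambda>x y. le y x) k"
  unfolding fB_def
proof (rule sum.reindex_bij_witness[where j = "\<lambda>es. (\<lambda>p\<in>A. card {i. i < k \<and> p \<in> es ! i})"
      and i = "\<lambda>z. map (\<lambda>i. {p\<in>A. k - i \<le> z p}) [0..<k]"])
  fix es assume es: "es \<in> multichains (lower_ideals A le) (\<subseteq>) k"
  hence len: "length es = k" and srt: "sorted_wrt (\<subseteq>) es" and sub: "set es \<subseteq> lower_ideals A le"
    unfolding multichains_def by auto
  have esA: "es ! i \<subseteq> A" if "i < k" for i
  proof -
    have "es ! i \<in> set es" using len that by simp
    thus ?thesis using sub unfolding lower_ideals_def by blast
  qed
  have esL: "y \<in> es ! i" if "i < k" "x \<in> es ! i" "y \<in> A" "le y x" for i x y
    using sub len that nth_mem[of i es] unfolding lower_ideals_def by blast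
  show "map (\<lambda>i. {p\<in>A. k - i \<le> (\<lambda>p\<in>A. card {i. i < k \<and> p \<in> es ! i}) p}) [0..<k] = es"
  proof (rule nth_equalityI)
    show "length (map (\<lambda>i. {p\<in>A. k - i \<le> (\<lambda>p\<in>A. card {i. i < k \<and> p \<in> es ! i}) p}) [0..<k]) = length es"
      using len by simp
  next
    fix m assume "m < length (map (\<lambda>i. {p\<in>A. k - i \<le> (\<lambda>p\<in>A. card {i. i < k \<and> p \<in> es ! i}) p}) [0..<k])"
    hence m: "m < k" by simp
    show "map (\<lambda>i. {p\<in>A. k - i \<le> (\<lambda>p\<in>A. card {i. i < k \<and> p \<in> es ! i}) p}) [0..<k] ! m = es ! m"
      using m chain_mem[OF srt len m] esA[OF m] by auto
  qed
  show "(\<lambda>p\<in>A. card {i. i < k \<and> p \<in> es ! i}) \<in> order_points A (\<lambda>x y. le y x) k"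
    unfolding order_points_def
  proof (intro CollectI conjI ballI impI)
    show "(\<lambda>p\<in>A. card {i. i < k \<and> p \<in> es ! i}) \<in> A \<rightarrow>\<^sub>E {0..k}"
    proof (rule restrict_PiE_iff[THEN iffD2], intro ballI)
      fix p assume "p \<in> A"
      have "card {i. i < k \<and> p \<in> es ! i} \<le> card {..<k}" by (rule card_mono) auto
      thus "card {i. i < k \<and> p \<in> es ! i} \<in> {0..k}" by simp
    qed
  next
    fix p p' assume pp: "p \<in> A" "p' \<in> A" "le p' p"
    have "{i. i < k \<and> p \<in> es ! i} \<subseteq> {i. i < k \<and> p' \<in> es ! i}" using esL pp by blast
    hence "card {i. i < k \<and> p \<in> es ! i} \<le> card {i. i < k \<and> p' \<in> es ! i}"
      by (rule card_mono[rotated]) (rule finite_subset[of _ "{..<k}"], auto)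
    thus "(\<lambda>p\<in>A. card {i. i < k \<and> p \<in> es ! i}) p \<le> (\<lambda>p\<in>A. card {i. i < k \<and> p \<in> es ! i}) p'"
      using pp by simp
  qed
  have "(\<Sum>p\<in>A. card {i. i < k \<and> p \<in> es ! i}) = (\<Sum>p\<in>A. \<Sum>i<k. if p \<in> es ! i then 1 else 0)"
  proof (rule sum.cong[OF refl])
    fix p assume "p \<in> A"
    have "{i. i < k \<and> p \<in> es ! i} = {i\<in>{..<k}. p \<in> es ! i}" by auto
    thus "card {i. i < k \<and> p \<in> es ! i} = (\<Sum>i<k. if p \<in> es ! i then 1 else 0)"
      using card_filter_sum[of "{..<k}" "\<lambda>i. p \<in> es ! i"] by simp
  qed
  also have "\<dots> = (\<Sum>i<k. \<Sum>p\<in>A. if p \<in> es ! i then 1 else 0)" by (rule sum.swap)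
  also have "\<dots> = (\<Sum>i<k. card (es ! i))"
  proof (rule sum.cong[OF refl])
    fix i assume "i \<in> {..<k}"
    hence "{p\<in>A. p \<in> es ! i} = es ! i" using esA by auto
    thus "(\<Sum>p\<in>A. if p \<in> es ! i then 1 else 0) = card (es ! i)"
      using card_filter_sum[OF fin, of "\<lambda>p. p \<in> es ! i"] by simp
  qed
  also have "\<dots> = (\<Sum>e\<leftarrow>es. card e)"
    using len by (simp add: sum_list_sum_nth atLeast0LessThan)
  finally show "qvar ^ (\<Sum>p\<in>A. (\<lambda>p\<in>A. card {i. i < k \<and> p \<in> es ! i}) p) = qvar ^ (\<Sum>e\<leftarrow>es. card e)"
    by simp
next
  fix z assume z: "z \<in> order_points A (\<lambda>x y. le y x) k"
  hence zA: "z \<in> A \<rightarrow>\<^sub>E {0..k}" and mono: "\<And>p p'. p \<in> A \<Longrightarrow> p' \<in> A \<Longrightarrow> le p' p \<Longrightarrow> z p \<le> z p'"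
    unfolding order_points_def by auto
  show "(\<lambda>p\<in>A. card {i. i < k \<and> p \<in> map (\<lambda>i. {p\<in>A. k - i \<le> z p}) [0..<k] ! i}) = z"
  proof
    fix p show "(\<lambda>p\<in>A. card {i. i < k \<and> p \<in> map (\<lambda>i. {p\<in>A. k - i \<le> z p}) [0..<k] ! i}) p = z p"
    proof (cases "p \<in> A")
      case True
      hence zk: "z p \<le> k" using zA by (auto simp: PiE_iff)
      have "{i. i < k \<and> p \<in> map (\<lambda>i. {p\<in>A. k - i \<le> z p}) [0..<k] ! i} = {k - z p..<k}"
        using True zk by auto
      thus ?thesis using True zk by simp
    next
      case False thus ?thesis using zA by (auto simp: PiE_iff extensional_def)
    qed
  qed
  show "map (\<lambda>i. {p\<in>A. k - i \<le> z p}) [0..<k] \<in> multichains (lower_ideals A le) (\<subseteq>) k"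
    unfolding multichains_def lower_ideals_def
  proof (intro CollectI conjI)
    show "length (map (\<lambda>i. {p\<in>A. k - i \<le> z p}) [0..<k]) = k" by simp
    show "set (map (\<lambda>i. {p\<in>A. k - i \<le> z p}) [0..<k]) \<subseteq> {I. I \<subseteq> A \<and> (\<forall>x\<in>I. \<forall>y\<in>A. le y x \<longrightarrow> y \<in> I)}"
      using mono by (auto intro: order_trans)
    show "sorted_wrt (\<subseteq>) (map (\<lambda>i. {p\<in>A. k - i \<le> z p}) [0..<k])"
      unfolding sorted_wrt_iff_nth_less by auto
  qed
qed


theorem mainTheorem3:
  fixes A :: "'a set" and le :: "'a \<Rightarrow> 'a \<Rightarrow> bool"
  assumes "finite A"
    and "\<And>x. x \<in> A \<Longrightarrow> le x x"
    and "\<And>x y. x \<in> A \<Longrightarrow> y \<in> A \<Longrightarrow> le x y \<Longrightarrow> le y x \<Longrightarrow> x = y"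
    and "\<And>x y z. x \<in> A \<Longrightarrow> y \<in> A \<Longrightarrow> z \<in> A \<Longrightarrow> le x y \<Longrightarrow> le y z \<Longrightarrow> le x z"
  shows "pcompose (qZeta (lower_ideals A le) (\<subseteq>) card) [:1, qvar:]
         = qOrder A (\<lambda>x y. le y x)"
proof -
  let ?le = "\<lambda>x y. le y x"
  obtain L where L: "\<And>n. poly L (qint n) = fB A ?le n"
    using goodd_poly[OF fB_good[OF assms(1)]] by blast
  have ord: "qOrder A ?le = L"
    unfolding qOrder_def
  proof (rule the_equality)
    show "\<forall>n. poly L (qint n) = (\<Sum>z\<in>order_points A ?le n. qvar ^ (\<Sum>p\<in>A. z p))"
      using L by (simp add: fB_def)
  next
    fix p assume "\<forall>n. poly p (qint n) = (\<Sum>z\<in>order_points A ?le n. qvar ^ (\<Sum>p\<in>A. z p))"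
    thus "p = L" by (intro poly_unique[of 0]) (simp add: L fB_def)
  qed
  define Z where "Z = pcompose L [:- 1 / qvar, 1 / qvar:]"
  have Zq: "poly Z (qint (Suc n)) = poly L (qint n)" for n
  proof -
    have "- 1 / qvar + qint (Suc n) * (1 / qvar) = qint n"
      using qvar_ne0 by (simp add: qint_Suc field_simps)
    thus ?thesis by (simp add: Z_def poly_pcompose)
  qed
  have zeta: "qZeta (lower_ideals A le) (\<subseteq>) card = Z"
    unfolding qZeta_def
  proof (rule the_equality)
    show "\<forall>n\<ge>2. poly Z (qint n) = (\<Sum>es\<in>multichains (lower_ideals A le) (\<subseteq>) (n - 1). qvar ^ (\<Sum>e\<leftarrow>es. card e))"
    proof (intro allI impI)
      fix n :: nat assume "2 \<le> n"
      then obtain m where n: "n = Suc m" by (cases n) auto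
      show "poly Z (qint n) = (\<Sum>es\<in>multichains (lower_ideals A le) (\<subseteq>) (n - 1). qvar ^ (\<Sum>e\<leftarrow>es. card e))"
        unfolding n using Zq L chain_bij[OF assms(1)] by simp
    qed
  next
    fix p assume p: "\<forall>n\<ge>2. poly p (qint n) = (\<Sum>es\<in>multichains (lower_ideals A le) (\<subseteq>) (n - 1). qvar ^ (\<Sum>e\<leftarrow>es. card e))"
    show "p = Z"
    proof (rule poly_unique[of 2])
      fix n :: nat assume "2 \<le> n"
      then obtain m where n: "n = Suc m" by (cases n) auto
      show "poly p (qint n) = poly Z (qint n)"
        using p \<open>2 \<le> n\<close> unfolding n using Zq L chain_bij[OF assms(1)] by simp
    qed
  qed
  have "pcompose Z [:1, qvar:] = L"
  proof (rule poly_unique[of 0])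
    fix n :: nat
    show "poly (pcompose Z [:1, qvar:]) (qint n) = poly L (qint n)"
      using Zq[of n] by (simp add: poly_pcompose qint_Suc mult.commute)
  qed
  thus ?thesis using zeta ord by simp
qed


end
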